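(* Let $\Lambda\Subset\mathbb X$ and fix a selector $s$. Let $\rho_0=\mathbf 1_{\{\varnothing\}}$ and $\rho_{n+1}=K_\Lambda\rho_n$ for $n\in\mathbb N_0$. Suppose there exists a function $\xi:\mathbf F\to[0,\infty)$ with $\tilde K_\Lambda\xi\le\xi$ pointwise and $\xi(\varnothing)=1$. Then the pointwise limit $\rho(X)=\lim_{n\to\infty}\rho_n(X)$ exists for every $X\in\mathbf F$, and $\rho=K_\Lambda\rho$, $\rho(\varnothing)=1$ and $|\rho|\le\xi$ pointwise.
   Context: $\mathbb X$ is a finite or countably infinite set, $X\Subset\mathbb X$ means finite subset, $\mathbf F$ is the set of finite subsets. Fix $z:\mathbb X\to\mathbb C$, $W:\mathbf F\to\mathbb C$. Conditional interaction: $W(X\mid B)=\prod_{C\subset B}W(X\cup C)$ if $X\cap B=\varnothing$, $W(X\mid B)=0$ if $X=\{y\}$ with $y\in B$, $W(X\mid B)=1$ otherwise. Boltzmann factor $\kappa(X\mid B)=\prod_{\varnothing\neq S\subset X}W(S\mid B)$, $\kappa(s\mid B)=\kappa(\{s\}\mid B)$. Kernel: $\gamma(s,N\mid B)=\sum_{M\subset N}(-1)^{|N\setminus M|}\kappa(s\mid B\cup M)$. A selector is a map $s:\mathbf F\setminus\{\varnothing\}\to\mathbb X$ with $s_X:=s(X)\in X$; put $X'_s=X\setminus\{s_X\}$. For $\rho:\mathbf F\to\mathbb C$: $(K_\Lambda\rho)(\varnothing)=\rho(\varnothing)$ and, for $X\neq\varnothing$, $(K_\Lambda\rho)(X)=\sum_{N\subset\Lambda\setminus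 X'_s}z(s_X)\gamma(s_X,N\mid X'_s)\rho(X'_s\cup N)$. For $\tilde\rho:\mathbf F\to[0,\infty)$: $(\tilde K_\Lambda\tilde\rho)(\varnothing)=\tilde\rho(\varnothing)$ and, for $X\neq\varnothing$, $(\tilde K_\Lambda\tilde\rho)(X)=\sum_{N\subset\Lambda\setminus X'_s}|z(s_X)|\,|\gamma(s_X,N\mid X'_s)|\,\tilde\rho(X'_s\cup N)$. *)

theory Defs
  imports "HOL-Analysis.Analysis" "HOL-Library.Countable"
begin

text \<open>Finite subsets of the (countable) ground type 'x are sets X with finite X.
  Functions on the finite subsets are modelled as functions on 'x set whose values
  at infinite sets are irrelevant.\<close>

definition W_cond :: "('x set \<Rightarrow> complex) \<Rightarrow> 'x set \<Rightarrow> 'x set \<Rightarrow> complex" where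
  "W_cond W X B =
     (if X \<inter> B = {} then (\<Prod>C\<in>Pow B. W (X \<union> C))
      else if (\<exists>y. X = {y} \<and> y \<in> B) then 0 else 1)"

definition kappa :: "('x set \<Rightarrow> complex) \<Rightarrow> 'x set \<Rightarrow> 'x set \<Rightarrow> complex" where
  "kappa W X B = (\<Prod>S\<in>Pow X - {{}}. W_cond W S B)"

definition kappa1 :: "('x set \<Rightarrow> complex) \<Rightarrow> 'x \<Rightarrow> 'x set \<Rightarrow> complex" where
  "kappa1 W s B = kappa W {s} B"

definition gamma :: "('x set \<Rightarrow> complex) \<Rightarrow> 'x \<Rightarrow> 'x set \<Rightarrow> 'x set \<Rightarrow> complex" where
  "gamma W s N B = (\<Sum>M\<in>Pow N. (-1) ^ card (N - M) * kappa1 W s (B \<union> M))"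

definition selector :: "('x set \<Rightarrow> 'x) \<Rightarrow> bool" where
  "selector sel \<longleftrightarrow> (\<forall>X. finite X \<and> X \<noteq> {} \<longrightarrow> sel X \<in> X)"

definition K_op :: "('x \<Rightarrow> complex) \<Rightarrow> ('x set \<Rightarrow> complex) \<Rightarrow> ('x set \<Rightarrow> 'x)
    \<Rightarrow> 'x set \<Rightarrow> ('x set \<Rightarrow> complex) \<Rightarrow> 'x set \<Rightarrow> complex" where
  "K_op z W sel \<Lambda> \<rho> X =
     (if X = {} then \<rho> {}
      else (let X' = X - {sel X} in
        \<Sum>N\<in>Pow (\<Lambda> - X'). z (sel X) * gamma W (sel X) N X' * \<rho> (X' \<union> N)))"

definition K_tilde :: "('x \<Rightarrow> complex) \<Rightarrow> ('x set \<Rightarrow> complex) \<Rightarrow> ('x set \<Rightarrow> 'x)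
    \<Rightarrow> 'x set \<Rightarrow> ('x set \<Rightarrow> real) \<Rightarrow> 'x set \<Rightarrow> real" where
  "K_tilde z W sel \<Lambda> \<rho> X =
     (if X = {} then \<rho> {}
      else (let X' = X - {sel X} in
        \<Sum>N\<in>Pow (\<Lambda> - X'). cmod (z (sel X)) * cmod (gamma W (sel X) N X') * \<rho> (X' \<union> N)))"

primrec rho_seq :: "('x \<Rightarrow> complex) \<Rightarrow> ('x set \<Rightarrow> complex) \<Rightarrow> ('x set \<Rightarrow> 'x)
    \<Rightarrow> 'x set \<Rightarrow> nat \<Rightarrow> 'x set \<Rightarrow> complex" where
  "rho_seq z W sel \<Lambda> 0 = (\<lambda>X. if X = {} then 1 else 0)"
| "rho_seq z W sel \<Lambda> (Suc n) = K_op z W sel \<Lambda> (rho_seq z W sel \<Lambda> n)"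

end

theory Submission
  imports Defs
begin

primrec rtil :: "('x \<Rightarrow> complex) \<Rightarrow> ('x set \<Rightarrow> complex) \<Rightarrow> ('x set \<Rightarrow> 'x)
    \<Rightarrow> 'x set \<Rightarrow> nat \<Rightarrow> 'x set \<Rightarrow> real" where
  "rtil z W sel \<Lambda> 0 = (\<lambda>X. if X = {} then 1 else 0)"
| "rtil z W sel \<Lambda> (Suc n) = K_tilde z W sel \<Lambda> (rtil z W sel \<Lambda> n)"

lemma K_op_bound:
  assumes "\<And>Y. cmod (f Y) \<le> g Y"
  shows "cmod (K_op z W sel \<Lambda> f X) \<le> K_tilde z W sel \<Lambda> g X"
proof (cases "X = {}")
  case True then show ?thesis using assms by (simp add: K_op_def K_tilde_def)
next
  case False
  let ?X' = "X - {sel X}"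
  have "cmod (K_op z W sel \<Lambda> f X) = cmod (\<Sum>N\<in>Pow (\<Lambda> - ?X'). z (sel X) * gamma W (sel X) N ?X' * f (?X' \<union> N))"
    using False by (simp add: K_op_def Let_def)
  also have "\<dots> \<le> (\<Sum>N\<in>Pow (\<Lambda> - ?X'). cmod (z (sel X) * gamma W (sel X) N ?X' * f (?X' \<union> N)))"
    by (rule norm_sum)
  also have "\<dots> \<le> (\<Sum>N\<in>Pow (\<Lambda> - ?X'). cmod (z (sel X)) * cmod (gamma W (sel X) N ?X') * g (?X' \<union> N))"
    by (rule sum_mono) (simp add: norm_mult mult_left_mono assms)
  also have "\<dots> = K_tilde z W sel \<Lambda> g X" using False by (simp add: K_tilde_def Let_def)
  finally show ?thesis .
qed

lemma K_op_diff:
  "K_op z W sel \<Lambda> f X - K_op z W sel \<Lambda> g X = K_op z W sel \<Lambda> (\<lambda>Y. f Y - g Y) X"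
  by (simp add: K_op_def Let_def sum_subtractf[symmetric] right_diff_distrib)

lemma K_tilde_diff:
  "K_tilde z W sel \<Lambda> f X - K_tilde z W sel \<Lambda> g X = K_tilde z W sel \<Lambda> (\<lambda>Y. f Y - g Y) X"
  by (simp add: K_tilde_def Let_def sum_subtractf[symmetric] right_diff_distrib)

lemma d_bound:
  "cmod (rho_seq z W sel \<Lambda> (Suc n) X - rho_seq z W sel \<Lambda> n X)
     \<le> rtil z W sel \<Lambda> (Suc n) X - rtil z W sel \<Lambda> n X"
proof (induction n arbitrary: X)
  case 0
  show ?case
  proof (cases "X = {}")
    case True then show ?thesis by (simp add: K_op_def K_tilde_def)
  next
    case False
    have "cmod (K_op z W sel \<Lambda> (rho_seq z W sel \<Lambda> 0) X) \<le> K_tilde z W sel \<Lambda> (rtil z W sel \<Lambda> 0) X"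
      by (rule K_op_bound) simp
    then show ?thesis using False by simp
  qed
next
  case (Suc n)
  have "cmod (K_op z W sel \<Lambda> (\<lambda>Y. rho_seq z W sel \<Lambda> (Suc n) Y - rho_seq z W sel \<Lambda> n Y) X)
     \<le> K_tilde z W sel \<Lambda> (\<lambda>Y. rtil z W sel \<Lambda> (Suc n) Y - rtil z W sel \<Lambda> n Y) X"
    by (rule K_op_bound) (rule Suc.IH)
  then show ?case
    by (simp only: rho_seq.simps rtil.simps K_op_diff K_tilde_diff)
qed

lemma rho_abs_bound:
  "cmod (rho_seq z W sel \<Lambda> n X) \<le> rtil z W sel \<Lambda> n X"
proof (induction n arbitrary: X)
  case 0 then show ?case by simp
next
  case (Suc n)
  show ?case by (simp, rule K_op_bound, rule Suc.IH)
qed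

lemma rtil_le_xi:
  assumes fin: "finite \<Lambda>"
    and nn: "\<forall>X. finite X \<longrightarrow> \<xi> X \<ge> 0"
    and K: "\<forall>X. finite X \<longrightarrow> K_tilde z W sel \<Lambda> \<xi> X \<le> \<xi> X"
    and e: "\<xi> {} = 1"
  shows "finite X \<Longrightarrow> rtil z W sel \<Lambda> n X \<le> \<xi> X"
proof (induction n arbitrary: X)
  case 0 then show ?case using nn e by simp
next
  case (Suc n)
  show ?case
  proof (cases "X = {}")
    case True
    then show ?thesis using Suc.IH[of "{}"] by (simp add: K_tilde_def)
  next
    case False
    let ?X' = "X - {sel X}"
    have "rtil z W sel \<Lambda> (Suc n) X = (\<Sum>N\<in>Pow (\<Lambda> - ?X'). cmod (z (sel X)) * cmod (gamma W (sel X) N ?X') * rtil z W sel \<Lambda> n (?X' \<union> N))"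
      using False by (simp add: K_tilde_def Let_def)
    also have "\<dots> \<le> (\<Sum>N\<in>Pow (\<Lambda> - ?X'). cmod (z (sel X)) * cmod (gamma W (sel X) N ?X') * \<xi> (?X' \<union> N))"
    proof (rule sum_mono)
      fix N assume "N \<in> Pow (\<Lambda> - ?X')"
      then have "finite (?X' \<union> N)" using fin Suc.prems by (auto intro: finite_subset)
      then show "cmod (z (sel X)) * cmod (gamma W (sel X) N ?X') * rtil z W sel \<Lambda> n (?X' \<union> N)
          \<le> cmod (z (sel X)) * cmod (gamma W (sel X) N ?X') * \<xi> (?X' \<union> N)"
        using Suc.IH by (simp add: mult_left_mono)
    qed
    also have "\<dots> = K_tilde z W sel \<Lambda> \<xi> X" using False by (simp add: K_tilde_def Let_def)
    also have "\<dots> \<le> \<xi> X" using K Suc.prems by blast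
    finally show ?thesis .
  qed
qed

lemma rho_empty: "rho_seq z W sel \<Lambda> n {} = 1"
  by (induction n) (simp_all add: K_op_def)

theorem proposition6p3:
  fixes z :: "'x::countable \<Rightarrow> complex"
    and W :: "'x set \<Rightarrow> complex"
    and sel :: "'x set \<Rightarrow> 'x"
    and \<Lambda> :: "'x set"
    and \<xi> :: "'x set \<Rightarrow> real"
  assumes "finite \<Lambda>"
    and "selector sel"
    and "\<forall>X. finite X \<longrightarrow> \<xi> X \<ge> 0"
    and "\<forall>X. finite X \<longrightarrow> K_tilde z W sel \<Lambda> \<xi> X \<le> \<xi> X"
    and "\<xi> {} = 1"
  shows "\<exists>\<rho> :: 'x set \<Rightarrow> complex.
           (\<forall>X. finite X \<longrightarrow> (\<lambda>n. rho_seq z W sel \<Lambda> n X) \<longlonglongrightarrow> \<rho> X)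
         \<and> (\<forall>X. finite X \<longrightarrow> \<rho> X = K_op z W sel \<Lambda> \<rho> X)
         \<and> \<rho> {} = 1
         \<and> (\<forall>X. finite X \<longrightarrow> cmod (\<rho> X) \<le> \<xi> X)"
proof -
  let ?r = "rho_seq z W sel \<Lambda>"
  let ?t = "rtil z W sel \<Lambda>"
  define \<rho> where "\<rho> X = lim (\<lambda>n. ?r n X)" for X
  have conv: "(\<lambda>n. ?r n X) \<longlonglongrightarrow> \<rho> X" if fX: "finite X" for X
  proof -
    let ?d = "\<lambda>k. ?r (Suc k) X - ?r k X"
    let ?e = "\<lambda>k. ?t (Suc k) X - ?t k X"
    have enn: "0 \<le> ?e k" for k using d_bound[of z W sel \<Lambda> k X] norm_ge_zero[of "?r (Suc k) X - ?r k X"] by linarith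
    have "(\<Sum>i<n. ?e i) \<le> \<xi> X" for n
      using sum_lessThan_telescope[of "\<lambda>k. ?t k X" n] rtil_le_xi[OF assms(1,3,4,5) fX, of n]
        assms(3) fX by (auto split: if_splits)
    then have "summable ?e" by (intro summableI_nonneg_bounded[OF enn])
    then have "summable ?d"
      by (rule summable_comparison_test') (rule d_bound)
    then have "(\<lambda>n. \<Sum>i<n. ?d i) \<longlonglongrightarrow> suminf ?d" by (rule summable_LIMSEQ)
    then have "(\<lambda>n. ?r 0 X + (\<Sum>i<n. ?d i)) \<longlonglongrightarrow> ?r 0 X + suminf ?d"
      by (intro tendsto_add tendsto_const)
    moreover have "?r 0 X + (\<Sum>i<n. ?d i) = ?r n X" for n
      using sum_lessThan_telescope[of "\<lambda>k. ?r k X" n] by simp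
    ultimately have "convergent (\<lambda>n. ?r n X)" unfolding convergent_def by auto
    then show ?thesis unfolding \<rho>_def by (simp add: convergent_LIMSEQ_iff)
  qed
  have fixpt: "\<rho> X = K_op z W sel \<Lambda> \<rho> X" if fX: "finite X" for X
  proof (cases "X = {}")
    case True then show ?thesis by (simp add: K_op_def)
  next
    case False
    let ?X' = "X - {sel X}"
    have "(\<lambda>n. ?r (Suc n) X) \<longlonglongrightarrow> \<rho> X" using conv[OF fX] by (rule LIMSEQ_Suc)
    moreover have "(\<lambda>n. ?r (Suc n) X) = (\<lambda>n. \<Sum>N\<in>Pow (\<Lambda> - ?X'). z (sel X) * gamma W (sel X) N ?X' * ?r n (?X' \<union> N))"
      using False by (simp only: rho_seq.simps K_op_def Let_def if_False)
    moreover have "(\<lambda>n. \<Sum>N\<in>Pow (\<Lambda> - ?X'). z (sel X) * gamma W (sel X) N ?X' * ?r n (?X' \<union> N))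
        \<longlonglongrightarrow> (\<Sum>N\<in>Pow (\<Lambda> - ?X'). z (sel X) * gamma W (sel X) N ?X' * \<rho> (?X' \<union> N))"
    proof (intro tendsto_sum tendsto_mult tendsto_const)
      fix N assume "N \<in> Pow (\<Lambda> - ?X')"
      then have "finite (?X' \<union> N)" using assms(1) fX by (auto intro: finite_subset)
      then show "(\<lambda>n. ?r n (?X' \<union> N)) \<longlonglongrightarrow> \<rho> (?X' \<union> N)" by (rule conv)
    qed
    ultimately have "\<rho> X = (\<Sum>N\<in>Pow (\<Lambda> - ?X'). z (sel X) * gamma W (sel X) N ?X' * \<rho> (?X' \<union> N))"
      using LIMSEQ_unique by (metis (no_types))
    then show ?thesis using False by (simp add: K_op_def Let_def)
  qed
  have e: "\<rho> {} = 1" unfolding \<rho>_def by (simp add: rho_empty)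
  have bd: "cmod (\<rho> X) \<le> \<xi> X" if fX: "finite X" for X
  proof (rule tendsto_upperbound)
    show "((\<lambda>n. cmod (?r n X)) \<longlongrightarrow> cmod (\<rho> X)) sequentially"
      using conv[OF fX] by (rule tendsto_norm)
    show "\<forall>\<^sub>F n in sequentially. cmod (?r n X) \<le> \<xi> X"
      using rho_abs_bound[of z W sel \<Lambda> _ X] rtil_le_xi[OF assms(1,3,4,5) fX]
      by (intro always_eventually allI) (rule order_trans)
  qed simp
  show ?thesis using conv fixpt e bd by blast
qed

end
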